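(* Let $\mathcal G=(\mathcal V,\mathcal E,W)$ be a network, $h\in\mathbb{R}^{\mathcal V}$, and consider the SNC game with binary actions on $\mathcal G$ with external field $h$, with set of Nash equilibria $\mathcal N$. Let $\mathcal V=\mathcal R\cup\mathcal S$, $\mathcal R\cap\mathcal S=\emptyset$, be a binary partition such that both $\mathcal G_{\mathcal R}$ and $\mathcal G_{\mathcal S}$ are structurally balanced. If there exists $\tau\in\{\pm1\}^{\mathcal R}$ such that $\tau_iW_{ij}\tau_j\ge0$ for all $i,j\in\mathcal R$ and $w_i^{\mathcal R}+\tau_ih_i\ge w_i^{\mathcal S}$ for all $i\in\mathcal R$, then there exists a Nash equilibrium $x^*\in\mathcal N$ with $x^*_{\mathcal R}=\tau$.
   Context: A network is a triple $\mathcal G=(\mathcal V,\mathcal E,W)$ where $\mathcal V$ is a finite nonempty set, $\mathcal E\subseteq\mathcal V\times\mathcal V$, and $W\in\mathbb{R}^{\mathcal V\times\mathcal V}$ has zero diagonal and satisfies $W_{ij}\neq0$ iff $(i,j)\in\mathcal E$ (weights may have either sign). For $\mathcal U\subseteq\mathcal V$, the subnetwork $\mathcal G_{\mathcal U}$ has node set $\mathcal U$, links $\mathcal E\cap(\mathcal U\times\mathcal U)$ and weight matrix $W_{\mathcal U\mathcal U}$. A network is structurally balanced if its node set can be written as a disjoint union of two sets with nonnegative weights on links within each set and nonpositive weights on links between the two sets. For $i\in\mathcal V$ and $\mathcal B\subseteq\mathcal V$, $w_i^{\mathcal B}=\sum_{j\in\mathcal B}|W_{ij}|$. The SNC game with binary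 actions on $\mathcal G$ with external field $h\in\mathbb{R}^{\mathcal V}$ has player set $\mathcal V$, action set $\{-1,+1\}$ for each player, strategy profiles $\mathcal X=\{\pm1\}^{\mathcal V}$, and utilities $u_i(x)=h_ix_i+x_i\sum_{j\in\mathcal V}W_{ij}x_j$. A Nash equilibrium is $x^*$ with $x^*_i\in\arg\max_{a\in\{\pm1\}}u_i(a,x^*_{-i})$ for all $i$. *)

theory Defs
  imports "HOL-Analysis.Analysis"
begin

(* A network on node set V with weight matrix W (links = nonzero entries). *)
definition network :: "'v set \<Rightarrow> ('v \<Rightarrow> 'v \<Rightarrow> real) \<Rightarrow> bool" where
  "network V W \<longleftrightarrow> finite V \<and> V \<noteq> {} \<and> (\<forall>i\<in>V. W i i = 0)
     \<and> (\<forall>i j. (i \<notin> V \<or> j \<notin> V) \<longrightarrow> W i j = 0)"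

definition struct_balanced :: "'v set \<Rightarrow> ('v \<Rightarrow> 'v \<Rightarrow> real) \<Rightarrow> bool" where
  "struct_balanced U W \<longleftrightarrow> (\<exists>A B. A \<union> B = U \<and> A \<inter> B = {} \<and>
     (\<forall>i\<in>A. \<forall>j\<in>A. W i j \<ge> 0) \<and> (\<forall>i\<in>B. \<forall>j\<in>B. W i j \<ge> 0) \<and>
     (\<forall>i\<in>A. \<forall>j\<in>B. W i j \<le> 0 \<and> W j i \<le> 0))"

definition wdeg :: "('v \<Rightarrow> 'v \<Rightarrow> real) \<Rightarrow> 'v \<Rightarrow> 'v set \<Rightarrow> real" where
  "wdeg W i B = (\<Sum>j\<in>B. \<bar>W i j\<bar>)"

definition profile :: "'v set \<Rightarrow> ('v \<Rightarrow> real) \<Rightarrow> bool" where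
  "profile V x \<longleftrightarrow> (\<forall>i\<in>V. x i \<in> {-1, 1})"

definition utility :: "'v set \<Rightarrow> ('v \<Rightarrow> 'v \<Rightarrow> real) \<Rightarrow> ('v \<Rightarrow> real) \<Rightarrow> 'v \<Rightarrow> ('v \<Rightarrow> real) \<Rightarrow> real" where
  "utility V W h i x = h i * x i + x i * (\<Sum>j\<in>V. W i j * x j)"

definition nash_eq :: "'v set \<Rightarrow> ('v \<Rightarrow> 'v \<Rightarrow> real) \<Rightarrow> ('v \<Rightarrow> real) \<Rightarrow> ('v \<Rightarrow> real) \<Rightarrow> bool" where
  "nash_eq V W h x \<longleftrightarrow> profile V x \<and>
     (\<forall>i\<in>V. \<forall>a\<in>{-1, 1::real}. utility V W h i (x(i := a)) \<le> utility V W h i x)"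

end

theory Submission
  imports Defs
begin

lemma dev_util:
  assumes "network V W" "i \<in> V"
  shows "utility V W h i (x(i:=a)) = a * (h i + (\<Sum>j\<in>V. W i j * x j))"
proof -
  have Wii: "W i i = 0" using assms unfolding network_def by auto
  have "(\<Sum>j\<in>V. W i j * (x(i:=a)) j) = (\<Sum>j\<in>V. W i j * x j)"
    by (rule sum.cong) (auto simp: Wii)
  thus ?thesis unfolding utility_def by (simp add: algebra_simps)
qed

lemma best_resp:
  fixes f a b :: real
  assumes "a \<in> {-1,1}" "b \<in> {-1,1}" "b * f \<ge> 0"
  shows "a * f \<le> b * f"
  using assms by auto

theorem corollary1:
  fixes V R S :: "'v set" and W :: "'v \<Rightarrow> 'v \<Rightarrow> real" and h :: "'v \<Rightarrow> real"
    and \<tau> :: "'v \<Rightarrow> real"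
  assumes "network V W"
    and "R \<union> S = V" and "R \<inter> S = {}"
    and "struct_balanced R W" and "struct_balanced S W"
    and "\<forall>i\<in>R. \<tau> i \<in> {-1, 1}"
    and "\<forall>i\<in>R. \<forall>j\<in>R. \<tau> i * W i j * \<tau> j \<ge> 0"
    and "\<forall>i\<in>R. wdeg W i R + \<tau> i * h i \<ge> wdeg W i S"
  shows "\<exists>x. nash_eq V W h x \<and> (\<forall>i\<in>R. x i = \<tau> i)"
proof -
  have finV: "finite V" using assms(1) unfolding network_def by auto
  have finR: "finite R" and finS: "finite S" using finV assms(2) by (auto intro: finite_subset)
  obtain A B where AB: "A \<union> B = S" "A \<inter> B = {}"
    "\<forall>i\<in>A. \<forall>j\<in>A. W i j \<ge> 0" "\<forall>i\<in>B. \<forall>j\<in>B. W i j \<ge> 0"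
    "\<forall>i\<in>A. \<forall>j\<in>B. W i j \<le> 0 \<and> W j i \<le> 0"
    using assms(5) unfolding struct_balanced_def by blast
  define \<sigma> :: "'v \<Rightarrow> real" where "\<sigma> j = (if j \<in> A then 1 else -1)" for j
  have sig: "\<sigma> i * W i j * \<sigma> j \<ge> 0" if "i \<in> S" "j \<in> S" for i j
    using that AB unfolding \<sigma>_def by (auto simp: mult_nonneg_nonneg)
  define xT :: "'v set \<Rightarrow> 'v \<Rightarrow> real" where
    "xT T j = (if j \<in> R then \<tau> j else \<sigma> j * (if j \<in> T then 1 else -1))" for T j
  define F where "F T = {i\<in>S. \<sigma> i * (h i + (\<Sum>j\<in>V. W i j * xT T j)) \<ge> 0}" for T
  have expand: "\<sigma> i * (h i + (\<Sum>j\<in>V. W i j * xT T j)) = \<sigma> i * h i + (\<Sum>j\<in>V. \<sigma> i * W i j * xT T j)" for i T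
    by (simp add: algebra_simps sum_distrib_left)
  have "mono F"
  proof (rule monoI)
    fix T T' :: "'v set" assume TT: "T \<subseteq> T'"
    show "F T \<subseteq> F T'"
    proof
      fix i assume "i \<in> F T"
      hence iS: "i \<in> S" and ge: "\<sigma> i * (h i + (\<Sum>j\<in>V. W i j * xT T j)) \<ge> 0"
        unfolding F_def by auto
      have "(\<Sum>j\<in>V. \<sigma> i * W i j * xT T j) \<le> (\<Sum>j\<in>V. \<sigma> i * W i j * xT T' j)"
      proof (rule sum_mono)
        fix j assume jV: "j \<in> V"
        show "\<sigma> i * W i j * xT T j \<le> \<sigma> i * W i j * xT T' j"
        proof (cases "j \<in> R")
          case True thus ?thesis unfolding xT_def by simp
        next
          case False
          hence jS: "j \<in> S" using jV assms(2) by auto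
          have s: "\<sigma> i * W i j * \<sigma> j \<ge> 0" using sig iS jS .
          have "(if j \<in> T then 1 else -1) \<le> (if j \<in> T' then 1 else (-1::real))" using TT by auto
          hence "(\<sigma> i * W i j * \<sigma> j) * (if j \<in> T then 1 else -1) \<le> (\<sigma> i * W i j * \<sigma> j) * (if j \<in> T' then 1 else (-1::real))"
            using s by (rule mult_left_mono)
          thus ?thesis using False unfolding xT_def by (simp add: mult.assoc)
        qed
      qed
      thus "i \<in> F T'" using ge iS unfolding F_def expand by auto
    qed
  qed
  define T where "T = lfp F"
  have fixT: "F T = T" unfolding T_def using lfp_unfold[OF \<open>mono F\<close>] by simp
  define x where "x = xT T"
  have sigpm: "\<sigma> j \<in> {-1,1}" for j unfolding \<sigma>_def by auto
  have xpm: "x j \<in> {-1,1}" if "j \<in> V" for j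
    using that assms(2,6) sigpm unfolding x_def xT_def by auto
  have absx: "\<bar>x j\<bar> = 1" if "j \<in> V" for j using xpm[OF that] by auto
  have good: "x i * (h i + (\<Sum>j\<in>V. W i j * x j)) \<ge> 0" if iV: "i \<in> V" for i
  proof (cases "i \<in> R")
    case True
    have ti: "\<tau> i \<in> {-1,1}" using True assms(6) by auto
    have xi: "x i = \<tau> i" using True unfolding x_def xT_def by simp
    have split: "(\<Sum>j\<in>V. W i j * x j) = (\<Sum>j\<in>R. W i j * x j) + (\<Sum>j\<in>S. W i j * x j)"
      using sum.union_disjoint[OF finR finS assms(3)] assms(2) by simp
    have r: "\<tau> i * (\<Sum>j\<in>R. W i j * x j) = wdeg W i R"
      unfolding wdeg_def sum_distrib_left
    proof (rule sum.cong)
      fix j assume jR: "j \<in> R"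
      have "\<tau> i * W i j * \<tau> j \<ge> 0" using True jR assms(7) by auto
      moreover have "\<tau> j \<in> {-1,1}" using jR assms(6) by auto
      ultimately show "\<tau> i * (W i j * x j) = \<bar>W i j\<bar>"
        using ti jR unfolding x_def xT_def by (auto simp: abs_if split: if_splits)
    qed simp
    have s: "\<tau> i * (\<Sum>j\<in>S. W i j * x j) \<ge> - wdeg W i S"
      unfolding wdeg_def sum_distrib_left sum_negf[symmetric]
    proof (rule sum_mono)
      fix j assume jS: "j \<in> S"
      have "\<bar>\<tau> i * (W i j * x j)\<bar> = \<bar>W i j\<bar>"
        using ti absx[of j] jS assms(2) by (auto simp: abs_mult)
      thus "- \<bar>W i j\<bar> \<le> \<tau> i * (W i j * x j)" by linarith
    qed
    have "\<tau> i * (h i + (\<Sum>j\<in>V. W i j * x j)) = \<tau> i * h i + wdeg W i R + \<tau> i * (\<Sum>j\<in>S. W i j * x j)"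
      using split r by (simp add: algebra_simps)
    thus ?thesis using s xi assms(8) True by force
  next
    case False
    hence iS: "i \<in> S" using iV assms(2) by auto
    have xi: "x i = \<sigma> i * (if i \<in> T then 1 else -1)" using False unfolding x_def xT_def by simp
    have iff: "i \<in> T \<longleftrightarrow> \<sigma> i * (h i + (\<Sum>j\<in>V. W i j * x j)) \<ge> 0"
      using iS fixT unfolding F_def x_def by blast
    show ?thesis using iff xi by (cases "i \<in> T") (auto simp: mult.assoc)
  qed
  have "nash_eq V W h x"
    unfolding nash_eq_def profile_def
  proof (intro conjI ballI)
    fix i assume "i \<in> V" thus "x i \<in> {-1,1}" by (rule xpm)
  next
    fix i a assume iV: "i \<in> V" and a: "a \<in> {-1, 1::real}"
    have e: "utility V W h i x = x i * (h i + (\<Sum>j\<in>V. W i j * x j))"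
      using dev_util[OF assms(1) iV, of h x "x i"] by simp
    show "utility V W h i (x(i := a)) \<le> utility V W h i x"
      using dev_util[OF assms(1) iV, of h x] best_resp[OF a xpm[OF iV] good[OF iV]] e
      by simp
  qed
  moreover have "\<forall>i\<in>R. x i = \<tau> i" unfolding x_def xT_def by simp
  ultimately show ?thesis by blast
qed

end
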